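(* (a) There exist compatible t-pairs $\tau_1^1,\tau_2^1$ and a union $\tau^1$ of them such that $\operatorname{typ}_u(\tau_1^1)=\operatorname{typ}_u(\tau_2^1)=\operatorname{typ}_u(\tau^1)=t_5$. (b) There exist compatible t-pairs $\tau_1^2,\tau_2^2$ and a union $\tau^2$ of them such that $\operatorname{typ}_u(\tau_1^2)=\operatorname{typ}_u(\tau_2^2)=t_5$ and $\operatorname{typ}_u(\tau^2)=t_6$.
   Context: Let $\mathbb{N}=\{0,1,2,\dots\}$; for an integer $k\ge 2$ let $E_k=\{0,1,\dots,k-1\}$; let $\mathcal{P}(\mathbb{N})$ be the set of nonempty finite subsets of $\mathbb{N}$. Let $F$ be a nonempty set (of attribute names). A decision table $T\in\mathcal{M}_k(F)$ is a rectangular table with $n\ge 1$ columns labeled with attributes $f_1,\dots,f_n\in F$ (any two columns labeled with the same attribute are equal), whose rows are pairwise different tuples from $E_k^n$ (the set of rows may be empty), each row being labeled with a set of decisions from $\mathcal{P}(\mathbb{N})$. Write $At(T)=\{f_1,\dots,f_n\}$ and $\Delta(T)$ for the set of rows. For a word $\alpha=(f_{i_1},\delta_1)\cdots(f_{i_m},\delta_m)$ with $f_{i_j}\in At(T)$, $\delta_j\in E_k$, the subtable $T\alpha$ consists of the rows of $T$ having value $\delta_j$ in column $f_{i_j}$ for all $j$ ($T\lambda=T$ for the empty word $\lambda$). Operations on tables: (1) removal of a column from a table with at least two columns (if groups of equal rows appear, only the first row of each group, with its decision set, is kept); (2) changing of decisions: the decision sets attached to rows are replaced arbitrarily by sets from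 $\mathcal{P}(\mathbb{N})$; (3) permutation of columns: swap two columns together with their attribute labels; (4) duplication of columns: add a copy of a column (with its label) next to it. A set $\mathcal{C}\subseteq\mathcal{M}_k(F)$ is a closed class if every table obtained from a table of $\mathcal{C}$ by finitely many such operations belongs to $\mathcal{C}$. A decision tree over $\mathcal{M}_k(F)$ is a finite directed tree with a root (unique node with no entering edge) and at least two nodes such that the root and the edges leaving the root are unlabeled, each worker node (neither root nor terminal) is labeled with an attribute from $F$, each edge leaving a worker node is labeled with a number from $E_k$, and each terminal node is labeled with a number from $\mathbb{N}$. For a complete path $\xi$ (root to terminal node) whose worker nodes are labeled $f_{j_1},\dots,f_{j_m}$ in order, with the edges leaving them labeled $\delta_1,\dots,\delta_m$, put $\pi(\xi)=(f_{j_1},\delta_1)\cdots(f_{j_m},\delta_m)$, $\varphi(\xi)=f_{j_1}\cdots f_{j_m}$ (both empty if $m=0$), and let $\tau(\xi)$ be the label of its terminal node. A nondeterministic decision tree for $T$ is a decision tree $\Gamma$ whose worker-node attributes lie in $At(T)$, such that $\bigcup_{\xi}\Delta(T\pi(\xi))=\Delta(T)$ (union over complete paths), and for every row $r\in\Delta(T)$ and every complete path $\xi$ with $r\in\Delta(T\pi(\xi))$, $\tau(\xi)$ belongs to the decision set of $r$. A decision tree is deterministic if exactly one edge leaves the root and the edges leaving each worker node have pairwise different labels; a deterministic decision tree for $T$ is a deterministic decision tree that is a nondeterministic decision tree for $T$. A complexity measure over $\mathcal{M}_k(F)$ is any map $\psi:F^*\to\mathbb{N}$, where $F^*$ is the set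 of finite words over $F$ including the empty word $\lambda$. For a tree, $\psi(\Gamma)=\max_\xi\psi(\varphi(\xi))$ over complete paths. For $T$ with columns labeled $f_1,\dots,f_n$: $\psi^i(T)=\psi(f_1\cdots f_n)$, $\psi^d(T)$ is the minimum complexity of a deterministic decision tree for $T$, $\psi^a(T)$ the minimum complexity of a nondeterministic decision tree for $T$. A t-pair $(\mathcal{C},\psi)$ consists of a closed class $\mathcal{C}\subseteq\mathcal{M}_k(F)$ and a complexity measure $\psi$ over $\mathcal{M}_k(F)$. For $b,c\in\{i,d,a\}$ define the partial function $\mathcal{U}^{bc}_{\mathcal{C}\psi}(n)=\max\{\psi^b(T):T\in\mathcal{C},\psi^c(T)\le n\}$ (defined iff this set is nonempty and finite). For a partial function $g:\mathbb{N}\to\mathbb{N}$ with domain $\mathrm{Dom}(g)$, let $\mathrm{Dom}^+(g)=\{n\in\mathrm{Dom}(g):g(n)\ge n\}$, $\mathrm{Dom}^-(g)=\{n\in\mathrm{Dom}(g):g(n)\le n\}$. Its type $\operatorname{typ}(g)$ is: $\alpha$ if $\mathrm{Dom}(g)$ is infinite and $g$ is bounded above; $\beta$ if $\mathrm{Dom}(g)$ is infinite, $\mathrm{Dom}^+(g)$ is finite and $g$ is unbounded above; $\gamma$ if $\mathrm{Dom}^+(g)$ and $\mathrm{Dom}^-(g)$ are both infinite; $\delta$ if $\mathrm{Dom}(g)$ is infinite and $\mathrm{Dom}^-(g)$ is finite; $\epsilon$ if $\mathrm{Dom}(g)$ is finite. The upper type $\operatorname{typ}_u(\mathcal{C},\psi)$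 is the $3\times 3$ table with rows and columns indexed by $i,d,a$ (in this order) whose entry in row $b$, column $c$ is $\operatorname{typ}(\mathcal{U}^{bc}_{\mathcal{C}\psi})$. Row by row (rows $i,d,a$; entries in columns $i,d,a$): $t_5$: $i:(\gamma,\epsilon,\epsilon)$; $d:(\gamma,\gamma,\gamma)$; $a:(\gamma,\gamma,\gamma)$. $t_6$: $i:(\gamma,\epsilon,\epsilon)$; $d:(\gamma,\gamma,\delta)$; $a:(\gamma,\gamma,\gamma)$. Union: t-pairs $\tau_1=(\mathcal{C}_1,\psi_1)$ with $\mathcal{C}_1\subseteq\mathcal{M}_{k_1}(F_1)$ and $\tau_2=(\mathcal{C}_2,\psi_2)$ with $\mathcal{C}_2\subseteq\mathcal{M}_{k_2}(F_2)$ are compatible if $F_1\cap F_2=\varnothing$ and $\psi_1(\lambda)=\psi_2(\lambda)$. A union of them is a t-pair $(\mathcal{C},\psi)$ with $\mathcal{C}=\mathcal{C}_1\cup\mathcal{C}_2\subseteq\mathcal{M}_{\max(k_1,k_2)}(F_1\cup F_2)$ and $\psi:(F_1\cup F_2)^*\to\mathbb{N}$ any map with $\psi(\alpha)=\psi_1(\alpha)$ for $\alpha\in F_1^*$, $\psi(\alpha)=\psi_2(\alpha)$ for $\alpha\in F_2^*$, and arbitrary values on words containing letters from both $F_1$ and $F_2$. *)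

theory Defs
  imports Main
begin

text \<open>A decision table: list of column attributes, set of rows (tuples as lists),
  and decision sets attached to rows (empty set outside the rows, for canonicity).\<close>

record 'f dtable =
  attrs :: "'f list"
  rows  :: "nat list set"
  dec   :: "nat list \<Rightarrow> nat set"

definition in_M :: "nat \<Rightarrow> 'f set \<Rightarrow> 'f dtable \<Rightarrow> bool" where
  "in_M k F T \<longleftrightarrow>
     length (attrs T) \<ge> 1 \<and> set (attrs T) \<subseteq> F \<and>
     (\<forall>r\<in>rows T. length r = length (attrs T) \<and> (\<forall>v\<in>set r. v < k)) \<and>
     (\<forall>r\<in>rows T. \<forall>i<length (attrs T). \<forall>j<length (attrs T).
          attrs T ! i = attrs T ! j \<longrightarrow> r ! i = r ! j) \<and>
     (\<forall>r\<in>rows T. dec T r \<noteq> {} \<and> finite (dec T r)) \<and>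
     (\<forall>r. r \<notin> rows T \<longrightarrow> dec T r = {})"

definition ldel :: "nat \<Rightarrow> 'a list \<Rightarrow> 'a list" where
  "ldel i xs = take i xs @ drop (Suc i) xs"

definition lswap :: "nat \<Rightarrow> nat \<Rightarrow> 'a list \<Rightarrow> 'a list" where
  "lswap i j xs = (xs[i := xs ! j])[j := xs ! i]"

definition ldup :: "nat \<Rightarrow> 'a list \<Rightarrow> 'a list" where
  "ldup i xs = take (Suc i) xs @ (xs ! i) # drop (Suc i) xs"

definition table_op :: "'f dtable \<Rightarrow> 'f dtable \<Rightarrow> bool" where
  "table_op T T' \<longleftrightarrow>
     \<comment> \<open>(1) removal of column i; of each group of rows that become equal one
         representative keeps its decision set\<close>
     (\<exists>i. length (attrs T) \<ge> 2 \<and> i < length (attrs T) \<and>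
          attrs T' = ldel i (attrs T) \<and> rows T' = ldel i ` rows T \<and>
          (\<forall>r'\<in>rows T'. \<exists>r\<in>rows T. ldel i r = r' \<and> dec T' r' = dec T r) \<and>
          (\<forall>r'. r' \<notin> rows T' \<longrightarrow> dec T' r' = {}))
   \<or> \<comment> \<open>(2) changing of decisions\<close>
     (attrs T' = attrs T \<and> rows T' = rows T \<and>
      (\<forall>r\<in>rows T'. dec T' r \<noteq> {} \<and> finite (dec T' r)) \<and>
      (\<forall>r. r \<notin> rows T' \<longrightarrow> dec T' r = {}))
   \<or> \<comment> \<open>(3) permutation (swap) of two columns\<close>
     (\<exists>i j. i < length (attrs T) \<and> j < length (attrs T) \<and>
          attrs T' = lswap i j (attrs T) \<and> rows T' = lswap i j ` rows T \<and>
          dec T' = (\<lambda>r'. dec T (lswap i j r')))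
   \<or> \<comment> \<open>(4) duplication of column i (the copy is placed right after it)\<close>
     (\<exists>i. i < length (attrs T) \<and>
          attrs T' = ldup i (attrs T) \<and> rows T' = ldup i ` rows T \<and>
          (\<forall>r\<in>rows T. dec T' (ldup i r) = dec T r) \<and>
          (\<forall>r'. r' \<notin> rows T' \<longrightarrow> dec T' r' = {}))"

definition closed_class :: "nat \<Rightarrow> 'f set \<Rightarrow> 'f dtable set \<Rightarrow> bool" where
  "closed_class k F C \<longleftrightarrow>
     C \<subseteq> {T. in_M k F T} \<and> (\<forall>T\<in>C. \<forall>T'. table_op\<^sup>*\<^sup>* T T' \<longrightarrow> T' \<in> C)"

text \<open>A decision tree is the list of
  subtrees hanging from the (unlabelled) root.\<close>

datatype 'f dnode = Term nat | Work 'f "(nat \<times> 'f dnode) list"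

fun wf_node :: "nat \<Rightarrow> 'f dnode \<Rightarrow> bool" where
  "wf_node k (Term a) = True"
| "wf_node k (Work f es) = (es \<noteq> [] \<and> (\<forall>e\<in>set es. fst e < k \<and> wf_node k (snd e)))"

fun det_node :: "'f dnode \<Rightarrow> bool" where
  "det_node (Term a) = True"
| "det_node (Work f es) = (distinct (map fst es) \<and> (\<forall>e\<in>set es. det_node (snd e)))"

fun node_attrs :: "'f dnode \<Rightarrow> 'f set" where
  "node_attrs (Term a) = {}"
| "node_attrs (Work f es) = insert f (\<Union>e\<in>set es. node_attrs (snd e))"

fun node_paths :: "'f dnode \<Rightarrow> (('f \<times> nat) list \<times> nat) list" where
  "node_paths (Term a) = [([], a)]"
| "node_paths (Work f es) =
     concat (map (\<lambda>e. map (\<lambda>p. ((f, fst e) # fst p, snd p)) (node_paths (snd e))) es)"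

type_synonym 'f dtree = "'f dnode list"

definition wf_tree :: "nat \<Rightarrow> 'f dtree \<Rightarrow> bool" where
  "wf_tree k \<Gamma> \<longleftrightarrow> \<Gamma> \<noteq> [] \<and> (\<forall>t\<in>set \<Gamma>. wf_node k t)"

definition tree_attrs :: "'f dtree \<Rightarrow> 'f set" where
  "tree_attrs \<Gamma> = (\<Union>t\<in>set \<Gamma>. node_attrs t)"

definition tree_paths :: "'f dtree \<Rightarrow> (('f \<times> nat) list \<times> nat) list" where
  "tree_paths \<Gamma> = concat (map node_paths \<Gamma>)"

definition is_det_tree :: "'f dtree \<Rightarrow> bool" where
  "is_det_tree \<Gamma> \<longleftrightarrow> length \<Gamma> = 1 \<and> (\<forall>t\<in>set \<Gamma>. det_node t)"

definition sub_rows :: "'f dtable \<Rightarrow> ('f \<times> nat) list \<Rightarrow> nat list set" where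
  "sub_rows T \<alpha> = {r \<in> rows T. \<forall>p\<in>set \<alpha>. \<forall>i<length (attrs T).
                        attrs T ! i = fst p \<longrightarrow> r ! i = snd p}"

definition ndt_for :: "nat \<Rightarrow> 'f dtable \<Rightarrow> 'f dtree \<Rightarrow> bool" where
  "ndt_for k T \<Gamma> \<longleftrightarrow> wf_tree k \<Gamma> \<and> tree_attrs \<Gamma> \<subseteq> set (attrs T) \<and>
     (\<Union>\<xi>\<in>set (tree_paths \<Gamma>). sub_rows T (fst \<xi>)) = rows T \<and>
     (\<forall>\<xi>\<in>set (tree_paths \<Gamma>). \<forall>r\<in>sub_rows T (fst \<xi>). snd \<xi> \<in> dec T r)"

definition dt_for :: "nat \<Rightarrow> 'f dtable \<Rightarrow> 'f dtree \<Rightarrow> bool" where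
  "dt_for k T \<Gamma> \<longleftrightarrow> is_det_tree \<Gamma> \<and> ndt_for k T \<Gamma>"

definition tree_cost :: "('f list \<Rightarrow> nat) \<Rightarrow> 'f dtree \<Rightarrow> nat" where
  "tree_cost \<psi> \<Gamma> = Max ((\<lambda>\<xi>. \<psi> (map fst (fst \<xi>))) ` set (tree_paths \<Gamma>))"

datatype idx = I | D | A

definition psi_i :: "('f list \<Rightarrow> nat) \<Rightarrow> 'f dtable \<Rightarrow> nat" where
  "psi_i \<psi> T = \<psi> (attrs T)"

definition psi_d :: "nat \<Rightarrow> ('f list \<Rightarrow> nat) \<Rightarrow> 'f dtable \<Rightarrow> nat" where
  "psi_d k \<psi> T = (LEAST m. \<exists>\<Gamma>. dt_for k T \<Gamma> \<and> tree_cost \<psi> \<Gamma> = m)"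

definition psi_a :: "nat \<Rightarrow> ('f list \<Rightarrow> nat) \<Rightarrow> 'f dtable \<Rightarrow> nat" where
  "psi_a k \<psi> T = (LEAST m. \<exists>\<Gamma>. ndt_for k T \<Gamma> \<and> tree_cost \<psi> \<Gamma> = m)"

fun psi_m :: "idx \<Rightarrow> nat \<Rightarrow> ('f list \<Rightarrow> nat) \<Rightarrow> 'f dtable \<Rightarrow> nat" where
  "psi_m I k \<psi> T = psi_i \<psi> T"
| "psi_m D k \<psi> T = psi_d k \<psi> T"
| "psi_m A k \<psi> T = psi_a k \<psi> T"

record 'f tpair =
  tk   :: nat
  tF   :: "'f set"
  tC   :: "'f dtable set"
  tpsi :: "'f list \<Rightarrow> nat"

definition is_tpair :: "'f tpair \<Rightarrow> bool" where
  "is_tpair \<tau> \<longleftrightarrow> tk \<tau> \<ge> 2 \<and> tF \<tau> \<noteq> {} \<and> closed_class (tk \<tau>) (tF \<tau>) (tC \<tau>)"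

definition U_fun :: "'f tpair \<Rightarrow> idx \<Rightarrow> idx \<Rightarrow> nat \<Rightarrow> nat option" where
  "U_fun \<tau> b c n =
     (let S = {psi_m b (tk \<tau>) (tpsi \<tau>) T | T. T \<in> tC \<tau> \<and> psi_m c (tk \<tau>) (tpsi \<tau>) T \<le> n}
      in if S \<noteq> {} \<and> finite S then Some (Max S) else None)"

datatype tp_type = Alpha | Beta | Gamma | Delta | Epsilon

definition pdom :: "(nat \<Rightarrow> nat option) \<Rightarrow> nat set" where
  "pdom g = {n. g n \<noteq> None}"

definition pdom_plus :: "(nat \<Rightarrow> nat option) \<Rightarrow> nat set" where
  "pdom_plus g = {n \<in> pdom g. the (g n) \<ge> n}"

definition pdom_minus :: "(nat \<Rightarrow> nat option) \<Rightarrow> nat set" where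
  "pdom_minus g = {n \<in> pdom g. the (g n) \<le> n}"

definition bounded_above :: "(nat \<Rightarrow> nat option) \<Rightarrow> bool" where
  "bounded_above g \<longleftrightarrow> (\<exists>M. \<forall>n\<in>pdom g. the (g n) \<le> M)"

fun has_typ :: "(nat \<Rightarrow> nat option) \<Rightarrow> tp_type \<Rightarrow> bool" where
  "has_typ g Alpha = (infinite (pdom g) \<and> bounded_above g)"
| "has_typ g Beta = (infinite (pdom g) \<and> finite (pdom_plus g) \<and> \<not> bounded_above g)"
| "has_typ g Gamma = (infinite (pdom_plus g) \<and> infinite (pdom_minus g))"
| "has_typ g Delta = (infinite (pdom g) \<and> finite (pdom_minus g))"
| "has_typ g Epsilon = finite (pdom g)"

definition upper_type_is :: "'f tpair \<Rightarrow> (idx \<Rightarrow> idx \<Rightarrow> tp_type) \<Rightarrow> bool" where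
  "upper_type_is \<tau> t \<longleftrightarrow> (\<forall>b c. has_typ (U_fun \<tau> b c) (t b c))"

fun t5 :: "idx \<Rightarrow> idx \<Rightarrow> tp_type" where
  "t5 I I = Gamma" | "t5 I D = Epsilon" | "t5 I A = Epsilon"
| "t5 D _ = Gamma"
| "t5 A _ = Gamma"

fun t6 :: "idx \<Rightarrow> idx \<Rightarrow> tp_type" where
  "t6 I I = Gamma" | "t6 I D = Epsilon" | "t6 I A = Epsilon"
| "t6 D I = Gamma" | "t6 D D = Gamma" | "t6 D A = Delta"
| "t6 A _ = Gamma"

definition compatible :: "'f tpair \<Rightarrow> 'f tpair \<Rightarrow> bool" where
  "compatible \<tau>1 \<tau>2 \<longleftrightarrow> tF \<tau>1 \<inter> tF \<tau>2 = {} \<and> tpsi \<tau>1 [] = tpsi \<tau>2 []"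

definition is_union :: "'f tpair \<Rightarrow> 'f tpair \<Rightarrow> 'f tpair \<Rightarrow> bool" where
  "is_union \<tau>1 \<tau>2 \<tau> \<longleftrightarrow> is_tpair \<tau> \<and>
     tk \<tau> = max (tk \<tau>1) (tk \<tau>2) \<and> tF \<tau> = tF \<tau>1 \<union> tF \<tau>2 \<and> tC \<tau> = tC \<tau>1 \<union> tC \<tau>2 \<and>
     (\<forall>\<alpha>\<in>lists (tF \<tau>1). tpsi \<tau> \<alpha> = tpsi \<tau>1 \<alpha>) \<and>
     (\<forall>\<alpha>\<in>lists (tF \<tau>2). tpsi \<tau> \<alpha> = tpsi \<tau>2 \<alpha>)"

end

theory Submission
  imports Defs
begin


lemma length_ldel: "i < length xs \<Longrightarrow> length (ldel i xs) = length xs - 1"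
  by (simp add: ldel_def)
lemma nth_ldel: "i < length xs \<Longrightarrow> p < length xs - 1 \<Longrightarrow> ldel i xs ! p = xs ! (if p < i then p else Suc p)"
  by (auto simp: ldel_def nth_append min_def)
lemma set_ldel: "set (ldel i xs) \<subseteq> set xs"
  by (auto simp: ldel_def dest: in_set_takeD in_set_dropD)
lemma length_lswap: "length (lswap i j xs) = length xs" by (simp add: lswap_def)
lemma nth_lswap: "i < length xs \<Longrightarrow> j < length xs \<Longrightarrow> p < length xs \<Longrightarrow>
  lswap i j xs ! p = (if p = j then xs!i else if p = i then xs!j else xs!p)"
  by (simp add: lswap_def nth_list_update)
lemma lswap_lswap: "i < length xs \<Longrightarrow> j < length xs \<Longrightarrow> lswap i j (lswap i j xs) = xs"
  by (rule nth_equalityI) (auto simp: length_lswap nth_lswap)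
lemma set_lswap: "i < length xs \<Longrightarrow> j < length xs \<Longrightarrow> set (lswap i j xs) \<subseteq> set xs"
proof -
  assume i: "i < length xs" and j: "j < length xs"
  have "set (xs[i := xs ! j]) \<subseteq> set xs" using set_update_subset_insert[of xs i "xs!j"] nth_mem[OF j] by blast
  moreover have "xs ! i \<in> set xs" using nth_mem[OF i] .
  ultimately show ?thesis unfolding lswap_def using set_update_subset_insert[of "xs[i := xs ! j]" j "xs!i"] by blast
qed
lemma length_ldup: "i < length xs \<Longrightarrow> length (ldup i xs) = Suc (length xs)" by (simp add: ldup_def)
lemma nth_ldup: "i < length xs \<Longrightarrow> p < Suc (length xs) \<Longrightarrow> ldup i xs ! p = xs ! (if p \<le> i then p else p - 1)"
  unfolding ldup_def
  apply (cases "p \<le> i"; cases "p = Suc i")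
     apply (auto simp: nth_append min_def nth_Cons' Suc_diff_Suc)
  apply (rule arg_cong[where f="(!) xs"])
  by arith
lemma set_ldup: "i < length xs \<Longrightarrow> set (ldup i xs) \<subseteq> set xs"
  by (auto simp: ldup_def dest: in_set_takeD in_set_dropD)

lemma op_in_M:
  assumes op: "table_op T T'" and M: "in_M k F T"
  shows "in_M k F T' \<and> set (attrs T') \<subseteq> set (attrs T)"
  using op unfolding table_op_def
proof (elim disjE exE conjE)
  fix i assume n2: "2 \<le> length (attrs T)" and i: "i < length (attrs T)"
    and a: "attrs T' = ldel i (attrs T)" and r: "rows T' = ldel i ` rows T"
    and d1: "\<forall>r'\<in>rows T'. \<exists>r\<in>rows T. ldel i r = r' \<and> dec T' r' = dec T r"
    and d2: "\<forall>r'. r' \<notin> rows T' \<longrightarrow> dec T' r' = {}"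
  have la: "length (attrs T') = length (attrs T) - 1" using a i by (simp add: length_ldel)
  have sa: "set (attrs T') \<subseteq> set (attrs T)" using a set_ldel by metis
  have rr: "length r' = length (attrs T') \<and> (\<forall>v\<in>set r'. v < k)" if rin: "r' \<in> rows T'" for r'
  proof -
    obtain r where "r \<in> rows T" "r' = ldel i r" using rin r by auto
    then show ?thesis using M i la set_ldel[of i r] unfolding in_M_def by (auto simp: length_ldel)
  qed
  have cons: "r' ! p = r' ! q" if rin: "r' \<in> rows T'" "p < length (attrs T')" "q < length (attrs T')"
     "attrs T' ! p = attrs T' ! q" for r' p q
  proof -
    obtain r where rT: "r \<in> rows T" and rd: "r' = ldel i r" using rin r by auto
    have lr: "length r = length (attrs T)" using M rT unfolding in_M_def by auto
    let ?p = "if p < i then p else Suc p" and ?q = "if q < i then q else Suc q"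
    have "attrs T ! ?p = attrs T ! ?q" using that a i la nth_ldel[of i "attrs T"] by metis
    moreover have "?p < length (attrs T)" "?q < length (attrs T)" using that la by auto
    ultimately have "r ! ?p = r ! ?q" using M rT unfolding in_M_def by blast
    then show ?thesis using rd nth_ldel[of i r] lr i that la by metis
  qed
  have dd: "dec T' r' \<noteq> {} \<and> finite (dec T' r')" if "r' \<in> rows T'" for r'
    using d1 that M unfolding in_M_def by metis
  have "in_M k F T'" unfolding in_M_def
  proof (intro conjI)
    show "1 \<le> length (attrs T')" using la n2 M unfolding in_M_def by simp
    show "set (attrs T') \<subseteq> F" using sa M unfolding in_M_def by blast
  qed (use rr cons dd d2 in blast)+
  then show ?thesis using sa by blast
next
  assume a: "attrs T' = attrs T" and r: "rows T' = rows T" and d1: "\<forall>r\<in>rows T'. dec T' r \<noteq> {} \<and> finite (dec T' r)"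
    and d2: "\<forall>r. r \<notin> rows T' \<longrightarrow> dec T' r = {}"
  have "in_M k F T'" using M d1 d2 unfolding in_M_def a r by blast
  then show ?thesis using a by simp
next
  fix i j assume i: "i < length (attrs T)" and j: "j < length (attrs T)"
    and a: "attrs T' = lswap i j (attrs T)" and r: "rows T' = lswap i j ` rows T"
    and d: "dec T' = (\<lambda>r'. dec T (lswap i j r'))"
  have la: "length (attrs T') = length (attrs T)" using a by (simp add: length_lswap)
  have sa: "set (attrs T') \<subseteq> set (attrs T)" using a set_lswap i j by metis
  have rr: "length r' = length (attrs T') \<and> (\<forall>v\<in>set r'. v < k)" if rin: "r' \<in> rows T'" for r'
  proof -
    obtain r where rT: "r \<in> rows T" and "r' = lswap i j r" using rin r by auto
    moreover have "length r = length (attrs T)" using M rT unfolding in_M_def by auto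
    ultimately show ?thesis using M i j la set_lswap[of i r j] unfolding in_M_def by (auto simp: length_lswap)
  qed
  have cons: "r' ! p = r' ! q" if rin: "r' \<in> rows T'" "p < length (attrs T')" "q < length (attrs T')"
     "attrs T' ! p = attrs T' ! q" for r' p q
  proof -
    obtain r where rT: "r \<in> rows T" and rd: "r' = lswap i j r" using rin r by auto
    have lr: "length r = length (attrs T)" using M rT unfolding in_M_def by auto
    let ?p = "if p = j then i else if p = i then j else p" and ?q = "if q = j then i else if q = i then j else q"
    have e1: "attrs T' ! p = attrs T ! ?p" "attrs T' ! q = attrs T ! ?q"
      using a i j la that nth_lswap[of i "attrs T" j] by auto
    have e2: "r' ! p = r ! ?p" "r' ! q = r ! ?q"
      using rd i j la lr that nth_lswap[of i r j] by auto
    have "?p < length (attrs T)" "?q < length (attrs T)" using that la i j by auto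
    then show ?thesis using e1 e2 that M rT unfolding in_M_def by metis
  qed
  have dd: "dec T' r' \<noteq> {} \<and> finite (dec T' r')" if rin: "r' \<in> rows T'" for r'
  proof -
    obtain r where rT: "r \<in> rows T" and rd: "r' = lswap i j r" using rin r by auto
    have lr: "length r = length (attrs T)" using M rT unfolding in_M_def by auto
    have "lswap i j r' = r" using rd lswap_lswap i j lr by metis
    then show ?thesis using d M rT unfolding in_M_def by auto
  qed
  have d2: "dec T' r' = {}" if "r' \<notin> rows T'" for r'
  proof (rule ccontr)
    assume "dec T' r' \<noteq> {}"
    then have "lswap i j r' \<in> rows T" using d M unfolding in_M_def by auto
    then have "length r' = length (attrs T)" using M unfolding in_M_def by (auto simp: length_lswap)
    then have "r' = lswap i j (lswap i j r')" using lswap_lswap i j by metis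
    then have "r' \<in> rows T'" using r \<open>lswap i j r' \<in> rows T\<close> by auto
    then show False using that by simp
  qed
  have "in_M k F T'" unfolding in_M_def
  proof (intro conjI)
    show "1 \<le> length (attrs T')" using la M unfolding in_M_def by simp
    show "set (attrs T') \<subseteq> F" using sa M unfolding in_M_def by blast
  qed (use rr cons dd d2 in blast)+
  then show ?thesis using sa by blast
next
  fix i assume i: "i < length (attrs T)"
    and a: "attrs T' = ldup i (attrs T)" and r: "rows T' = ldup i ` rows T"
    and d1: "\<forall>r\<in>rows T. dec T' (ldup i r) = dec T r"
    and d2: "\<forall>r'. r' \<notin> rows T' \<longrightarrow> dec T' r' = {}"
  have la: "length (attrs T') = Suc (length (attrs T))" using a i by (simp add: length_ldup)
  have sa: "set (attrs T') \<subseteq> set (attrs T)" using a set_ldup i by metis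
  have rr: "length r' = length (attrs T') \<and> (\<forall>v\<in>set r'. v < k)" if rin: "r' \<in> rows T'" for r'
  proof -
    obtain r where rT: "r \<in> rows T" and "r' = ldup i r" using rin r by auto
    moreover have "length r = length (attrs T)" using M rT unfolding in_M_def by auto
    ultimately show ?thesis using M i la set_ldup[of i r] unfolding in_M_def by (auto simp: length_ldup)
  qed
  have cons: "r' ! p = r' ! q" if rin: "r' \<in> rows T'" "p < length (attrs T')" "q < length (attrs T')"
     "attrs T' ! p = attrs T' ! q" for r' p q
  proof -
    obtain r where rT: "r \<in> rows T" and rd: "r' = ldup i r" using rin r by auto
    have lr: "length r = length (attrs T)" using M rT unfolding in_M_def by auto
    let ?p = "if p \<le> i then p else p - 1" and ?q = "if q \<le> i then q else q - 1"
    have e1: "attrs T' ! p = attrs T ! ?p" "attrs T' ! q = attrs T ! ?q"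
      using a i la that nth_ldup[of i "attrs T"] by auto
    have e2: "r' ! p = r ! ?p" "r' ! q = r ! ?q"
      using rd i la lr that nth_ldup[of i r] by auto
    have "?p < length (attrs T)" "?q < length (attrs T)" using that la i by auto
    then show ?thesis using e1 e2 that M rT unfolding in_M_def by metis
  qed
  have dd: "dec T' r' \<noteq> {} \<and> finite (dec T' r')" if "r' \<in> rows T'" for r'
    using d1 that r M unfolding in_M_def by auto
  have "in_M k F T'" unfolding in_M_def
  proof (intro conjI)
    show "1 \<le> length (attrs T')" using la M unfolding in_M_def by simp
    show "set (attrs T') \<subseteq> F" using sa M unfolding in_M_def by blast
  qed (use rr cons dd d2 in blast)+
  then show ?thesis using sa by blast
qed



lemma snd_snds: "snd e \<in> Basic_BNFs.snds e" by (cases e) simp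

lemma node_paths_Work_set: "set (node_paths (Work f es)) = (\<Union>e\<in>set es. (\<lambda>p. ((f, fst e) # fst p, snd p)) ` set (node_paths (snd e)))"
  by auto

lemma paths_nonempty: "wf_node k t \<Longrightarrow> node_paths t \<noteq> []"
proof (induction t)
  case (Term a) then show ?case by simp
next
  case (Work f es)
  then obtain e where e: "e \<in> set es" by (cases es) auto
  have "wf_node k (snd e)" using Work.prems e by auto
  then have "node_paths (snd e) \<noteq> []" using Work.IH[OF e snd_snds] by blast
  then obtain p where "p \<in> set (node_paths (snd e))" by (cases "node_paths (snd e)") auto
  then have "((f, fst e) # fst p, snd p) \<in> set (node_paths (Work f es))" 
    unfolding node_paths_Work_set using e by blast
  then show ?case by (metis emptyE list.set(1))
qed

lemma paths_attrs: "p \<in> set (node_paths t) \<Longrightarrow> set (map fst (fst p)) \<subseteq> node_attrs t"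
proof (induction t arbitrary: p)
  case (Term a) then show ?case by simp
next
  case (Work f es)
  then obtain e q where e: "e \<in> set es" and q: "q \<in> set (node_paths (snd e))"
    and p: "p = ((f, fst e) # fst q, snd q)" unfolding node_paths_Work_set by blast
  have "set (map fst (fst q)) \<subseteq> node_attrs (snd e)" using Work.IH[OF e snd_snds q] .
  then show ?case using p e by auto
qed

lemma tree_paths_nonempty: "wf_tree k \<Gamma> \<Longrightarrow> set (tree_paths \<Gamma>) \<noteq> {}"
proof -
  assume w: "wf_tree k \<Gamma>"
  then obtain t where t: "t \<in> set \<Gamma>" unfolding wf_tree_def by (cases \<Gamma>) auto
  then have "node_paths t \<noteq> []" using w paths_nonempty unfolding wf_tree_def by blast
  then obtain p where "p \<in> set (node_paths t)" by (cases "node_paths t") auto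
  then have "p \<in> set (tree_paths \<Gamma>)" using t unfolding tree_paths_def by auto
  then show ?thesis by (metis empty_iff)
qed

lemma tree_paths_attrs: "p \<in> set (tree_paths \<Gamma>) \<Longrightarrow> set (map fst (fst p)) \<subseteq> tree_attrs \<Gamma>"
  unfolding tree_paths_def tree_attrs_def using paths_attrs by fastforce

fun mk :: "nat \<Rightarrow> 'f list \<Rightarrow> (nat list \<Rightarrow> nat) \<Rightarrow> 'f dnode" where
  "mk k [] lab = Term (lab [])"
| "mk k (f#fs) lab = Work f (map (\<lambda>v. (v, mk k fs (\<lambda>ws. lab (v#ws)))) [0..<k])"

lemma mk_paths: "set (node_paths (mk k fs lab)) =
   {(zip fs ws, lab ws) | ws. length ws = length fs \<and> (\<forall>v\<in>set ws. v < k)}"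
proof (induction fs arbitrary: lab)
  case Nil then show ?case by auto
next
  case (Cons f fs)
  let ?es = "map (\<lambda>v. (v, mk k fs (\<lambda>ws. lab (v#ws)))) [0..<k]"
  have mkc: "mk k (f # fs) lab = Work f ?es" by simp
  show ?case
  proof (rule set_eqI, rule iffI)
    fix x assume "x \<in> set (node_paths (mk k (f # fs) lab))"
    then obtain e p where e: "e \<in> set ?es" and p: "p \<in> set (node_paths (snd e))"
      and x: "x = ((f, fst e) # fst p, snd p)" unfolding mkc node_paths_Work_set by blast
    obtain v where v: "v < k" "e = (v, mk k fs (\<lambda>ws. lab (v#ws)))" using e by auto
    have "p \<in> {(zip fs ws, lab (v # ws)) | ws. length ws = length fs \<and> (\<forall>v\<in>set ws. v < k)}"
      using p v(2) Cons.IH[of "\<lambda>ws. lab (v # ws)"] by simp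
    then obtain ws where ws: "length ws = length fs" "\<forall>v\<in>set ws. v < k" "p = (zip fs ws, lab (v # ws))"
      by blast
    have "x = (zip (f # fs) (v # ws), lab (v # ws))" using x ws(3) v(2) by simp
    moreover have "length (v # ws) = length (f # fs)" "\<forall>u\<in>set (v # ws). u < k" using ws v by auto
    ultimately show "x \<in> {(zip (f # fs) ws, lab ws) |ws. length ws = length (f # fs) \<and> (\<forall>v\<in>set ws. v < k)}"
      by blast
  next
    fix x assume "x \<in> {(zip (f # fs) ws, lab ws) |ws. length ws = length (f # fs) \<and> (\<forall>v\<in>set ws. v < k)}"
    then obtain ws where ws: "length ws = Suc (length fs)" "\<forall>v\<in>set ws. v < k" "x = (zip (f # fs) ws, lab ws)"
      by auto
    then obtain v ws' where vw: "ws = v # ws'" by (cases ws) auto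
    have v: "v < k" using ws(2) vw by simp
    have "(zip fs ws', lab (v # ws')) \<in> set (node_paths (mk k fs (\<lambda>ws. lab (v # ws))))"
      using Cons.IH[of "\<lambda>ws. lab (v # ws)"] ws vw by auto
    moreover have "(v, mk k fs (\<lambda>ws. lab (v#ws))) \<in> set ?es" using v by auto
    ultimately have "((f, v) # zip fs ws', lab (v # ws')) \<in> set (node_paths (Work f ?es))"
      unfolding node_paths_Work_set by force
    then show "x \<in> set (node_paths (mk k (f # fs) lab))" using ws(3) vw mkc by simp
  qed
qed

lemma mk_wf: "0 < k \<Longrightarrow> wf_node k (mk k fs lab)"
  by (induction fs arbitrary: lab) auto
lemma mk_det: "det_node (mk k fs lab)"
  by (induction fs arbitrary: lab) (auto simp: distinct_map inj_on_def)
lemma mk_attrs: "node_attrs (mk k fs lab) \<subseteq> set fs"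
  by (induction fs arbitrary: lab) auto

definition labT :: "'f dtable \<Rightarrow> nat list \<Rightarrow> nat" where
  "labT T ws = (if ws \<in> rows T then (SOME a. a \<in> dec T ws) else 0)"

lemma in_M_cons:
  assumes M: "in_M k F T" and rT: "r \<in> rows T" and i: "i < length (attrs T)" and j: "j < length (attrs T)"
    and e: "attrs T ! i = attrs T ! j"
  shows "r ! i = r ! j"
proof -
  have "\<forall>r\<in>rows T. \<forall>i<length (attrs T). \<forall>j<length (attrs T). attrs T ! i = attrs T ! j \<longrightarrow> r ! i = r ! j"
    using M unfolding in_M_def by blast
  then show ?thesis using rT i j e by blast
qed

lemma in_M_len:
  assumes M: "in_M k F T" and rT: "r \<in> rows T"
  shows "length r = length (attrs T)" "\<forall>v\<in>set r. v < k" "dec T r \<noteq> {}" "finite (dec T r)"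
  using M rT unfolding in_M_def by blast+

lemma sub_rows_D:
  assumes "r \<in> sub_rows T \<alpha>" "p \<in> set \<alpha>" "i < length (attrs T)" "attrs T ! i = fst p"
  shows "r ! i = snd p"
  using assms unfolding sub_rows_def by blast

lemma sub_rows_I:
  assumes "r \<in> rows T" "\<And>p i. p \<in> set \<alpha> \<Longrightarrow> i < length (attrs T) \<Longrightarrow> attrs T ! i = fst p \<Longrightarrow> r ! i = snd p"
  shows "r \<in> sub_rows T \<alpha>"
  using assms unfolding sub_rows_def by blast

lemma sub_rows_rows: "r \<in> sub_rows T \<alpha> \<Longrightarrow> r \<in> rows T"
  unfolding sub_rows_def by blast

lemma sub_rows_zip:
  assumes M: "in_M k F T" and r: "r \<in> sub_rows T (zip (attrs T) ws)" and l: "length ws = length (attrs T)"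
  shows "r = ws"
proof -
  have rT: "r \<in> rows T" using r by (rule sub_rows_rows)
  have lr: "length r = length (attrs T)" using in_M_len[OF M rT] by blast
  have "r ! j = ws ! j" if j: "j < length (attrs T)" for j
  proof -
    have "zip (attrs T) ws ! j \<in> set (zip (attrs T) ws)" using nth_mem[of j "zip (attrs T) ws"] j l by simp
    moreover have "zip (attrs T) ws ! j = (attrs T ! j, ws ! j)" using j l by simp
    ultimately have m: "(attrs T ! j, ws ! j) \<in> set (zip (attrs T) ws)" by simp
    show ?thesis using sub_rows_D[OF r m j] by simp
  qed
  then show ?thesis using lr l by (simp add: nth_equalityI)
qed

lemma row_in_sub_rows:
  assumes M: "in_M k F T" and rT: "r \<in> rows T"
  shows "r \<in> sub_rows T (zip (attrs T) r)"
proof (rule sub_rows_I[OF rT])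
  have lr: "length r = length (attrs T)" using in_M_len[OF M rT] by blast
  fix p i assume p: "p \<in> set (zip (attrs T) r)" and i: "i < length (attrs T)" and e: "attrs T ! i = fst p"
  obtain j where j: "j < length (zip (attrs T) r)" "zip (attrs T) r ! j = p" using p by (auto simp: in_set_conv_nth)
  then have j2: "j < length (attrs T)" "p = (attrs T ! j, r ! j)" using lr by auto
  show "r ! i = snd p" using in_M_cons[OF M rT i j2(1)] e j2 by simp
qed

lemma image_const: "S \<noteq> {} \<Longrightarrow> (\<And>x. x \<in> S \<Longrightarrow> f x = c) \<Longrightarrow> f ` S = {c}"
  by auto

lemma full_tree:
  assumes M: "in_M k F T" and k: "0 < k"
  shows "dt_for k T [mk k (attrs T) (labT T)] \<and> tree_cost \<psi> [mk k (attrs T) (labT T)] = \<psi> (attrs T)"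
proof -
  let ?G = "[mk k (attrs T) (labT T)]"
  have P: "set (tree_paths ?G) = {(zip (attrs T) ws, labT T ws) | ws. length ws = length (attrs T) \<and> (\<forall>v\<in>set ws. v < k)}"
    unfolding tree_paths_def using mk_paths by simp
  have wf: "wf_tree k ?G" unfolding wf_tree_def using mk_wf k by auto
  have at: "tree_attrs ?G \<subseteq> set (attrs T)" using mk_attrs[of k "attrs T" "labT T"] by (simp add: tree_attrs_def)
  have cov: "(\<Union>\<xi>\<in>set (tree_paths ?G). sub_rows T (fst \<xi>)) = rows T"
  proof
    show "(\<Union>\<xi>\<in>set (tree_paths ?G). sub_rows T (fst \<xi>)) \<subseteq> rows T" using sub_rows_rows by blast
    show "rows T \<subseteq> (\<Union>\<xi>\<in>set (tree_paths ?G). sub_rows T (fst \<xi>))"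
    proof
      fix r assume rT: "r \<in> rows T"
      have "length r = length (attrs T)" "\<forall>v\<in>set r. v < k" using in_M_len[OF M rT] by blast+
      then have "(zip (attrs T) r, labT T r) \<in> set (tree_paths ?G)" unfolding P by blast
      moreover have "r \<in> sub_rows T (fst (zip (attrs T) r, labT T r))" using row_in_sub_rows[OF M rT] by simp
      ultimately show "r \<in> (\<Union>\<xi>\<in>set (tree_paths ?G). sub_rows T (fst \<xi>))" by blast
    qed
  qed
  have dec: "\<forall>\<xi>\<in>set (tree_paths ?G). \<forall>r\<in>sub_rows T (fst \<xi>). snd \<xi> \<in> dec T r"
  proof (intro ballI)
    fix \<xi> r assume xi: "\<xi> \<in> set (tree_paths ?G)" and r: "r \<in> sub_rows T (fst \<xi>)"
    obtain ws where ws: "length ws = length (attrs T)" "\<xi> = (zip (attrs T) ws, labT T ws)" using xi unfolding P by blast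
    have r2: "r \<in> sub_rows T (zip (attrs T) ws)" using r ws(2) by simp
    have rw: "r = ws" using sub_rows_zip[OF M r2 ws(1)] .
    have rT: "r \<in> rows T" using r by (rule sub_rows_rows)
    have ne: "dec T r \<noteq> {}" using in_M_len[OF M rT] by blast
    have "labT T ws = (SOME a. a \<in> dec T r)" unfolding labT_def using rw rT by simp
    moreover have "(SOME a. a \<in> dec T r) \<in> dec T r" using ne by (simp add: some_in_eq)
    ultimately show "snd \<xi> \<in> dec T r" using ws(2) by simp
  qed
  have det: "is_det_tree ?G" unfolding is_det_tree_def using mk_det by simp
  have dt: "dt_for k T ?G" unfolding dt_for_def ndt_for_def using det wf at cov dec by blast
  have "(\<lambda>\<xi>. \<psi> (map fst (fst \<xi>))) ` set (tree_paths ?G) = {\<psi> (attrs T)}"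
  proof -
    have "set (tree_paths ?G) \<noteq> {}" using tree_paths_nonempty[OF wf] .
    moreover have "\<psi> (map fst (fst \<xi>)) = \<psi> (attrs T)" if xin: "\<xi> \<in> set (tree_paths ?G)" for \<xi>
    proof -
      obtain ws where "length ws = length (attrs T)" "\<xi> = (zip (attrs T) ws, labT T ws)" using xin unfolding P by blast
      then show ?thesis by simp
    qed
    ultimately show ?thesis by (rule image_const)
  qed
  then show ?thesis using dt unfolding tree_cost_def by simp
qed

lemma psi_d_ex:
  assumes "in_M k F T" "0 < k"
  shows "\<exists>\<Gamma>. dt_for k T \<Gamma> \<and> tree_cost \<psi> \<Gamma> = psi_d k \<psi> T"
proof -
  obtain G where "dt_for k T G" using full_tree[OF assms] by blast
  then have "\<exists>\<Gamma>. dt_for k T \<Gamma> \<and> tree_cost \<psi> \<Gamma> = tree_cost \<psi> G" by blast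
  then show ?thesis unfolding psi_d_def by (rule LeastI)
qed

lemma psi_d_le_i:
  assumes "in_M k F T" "0 < k"
  shows "psi_d k \<psi> T \<le> psi_i \<psi> T"
  unfolding psi_d_def psi_i_def using full_tree[OF assms] by (intro Least_le) blast

lemma psi_a_ex:
  assumes "in_M k F T" "0 < k"
  shows "\<exists>\<Gamma>. ndt_for k T \<Gamma> \<and> tree_cost \<psi> \<Gamma> = psi_a k \<psi> T"
proof -
  obtain G where "ndt_for k T G" using full_tree[OF assms] unfolding dt_for_def by blast
  then have "\<exists>\<Gamma>. ndt_for k T \<Gamma> \<and> tree_cost \<psi> \<Gamma> = tree_cost \<psi> G" by blast
  then show ?thesis unfolding psi_a_def by (rule LeastI)
qed

lemma psi_a_le_d:
  assumes "in_M k F T" "0 < k"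
  shows "psi_a k \<psi> T \<le> psi_d k \<psi> T"
proof -
  obtain \<Gamma> where "dt_for k T \<Gamma>" "tree_cost \<psi> \<Gamma> = psi_d k \<psi> T" using psi_d_ex[OF assms] by blast
  then show ?thesis unfolding psi_a_def dt_for_def by (intro Least_le) blast
qed

lemma cost_path: 
  assumes "wf_tree k \<Gamma>"
  shows "\<exists>\<xi>\<in>set (tree_paths \<Gamma>). tree_cost \<psi> \<Gamma> = \<psi> (map fst (fst \<xi>))"
proof -
  let ?S = "(\<lambda>\<xi>. \<psi> (map fst (fst \<xi>))) ` set (tree_paths \<Gamma>)"
  have ne: "?S \<noteq> {}" using tree_paths_nonempty[OF assms] by simp
  have fin: "finite ?S" by simp
  have "Max ?S \<in> ?S" using Max_in[OF fin ne] .
  then show ?thesis unfolding tree_cost_def by blast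
qed

lemma cost_path_le: 
  "\<xi> \<in> set (tree_paths \<Gamma>) \<Longrightarrow> \<psi> (map fst (fst \<xi>)) \<le> tree_cost \<psi> \<Gamma>"
proof -
  assume a: "\<xi> \<in> set (tree_paths \<Gamma>)"
  have fin: "finite ((\<lambda>\<xi>. \<psi> (map fst (fst \<xi>))) ` set (tree_paths \<Gamma>))" by simp
  show ?thesis unfolding tree_cost_def using Max_ge[OF fin imageI[OF a]] .
qed



definition psiW :: "nat list \<Rightarrow> nat" where
  "psiW w = (case w of [] \<Rightarrow> 0 | f # fs \<Rightarrow> if fs = [] then 2 * (f div 3) + 1 else 2 * (f div 3) + 4)"
definition FS :: "nat set \<Rightarrow> nat set" where "FS S = {f. f div 3 \<in> S}"
definition CS :: "nat set \<Rightarrow> nat dtable set" where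
  "CS S = {T. in_M 2 (FS S) T \<and> (\<forall>f\<in>set (attrs T). \<forall>g\<in>set (attrs T). f div 3 = g div 3)}"
definition tp :: "nat set \<Rightarrow> nat tpair" where
  "tp S = \<lparr>tk = 2, tF = FS S, tC = CS S, tpsi = psiW\<rparr>"

definition Gt :: "nat \<Rightarrow> nat dtable" where
  "Gt m = \<lparr>attrs = [3*m, 3*m+1, 3*m+2], rows = {[1,0,0],[0,1,0],[0,0,1]},
     dec = (\<lambda>r. if r = [1,0,0] then {0} else if r = [0,1,0] then {1} else if r = [0,0,1] then {2} else {})\<rparr>"
definition Ht :: "nat \<Rightarrow> nat dtable" where
  "Ht m = \<lparr>attrs = [3*m], rows = {[0],[1]}, dec = (\<lambda>r. if r = [0] then {0} else if r = [1] then {1} else {})\<rparr>"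
definition Ot :: "nat \<Rightarrow> nat dtable" where
  "Ot m = \<lparr>attrs = [3*m], rows = {[0]}, dec = (\<lambda>r. if r = [0] then {0} else {})\<rparr>"

lemma psiW_simps: "psiW [] = 0" "psiW [f] = 2 * (f div 3) + 1" "fs \<noteq> [] \<Longrightarrow> psiW (f # fs) = 2 * (f div 3) + 4"
  by (auto simp: psiW_def split: list.splits)

lemma psiW_ge: "w \<noteq> [] \<Longrightarrow> psiW w \<ge> 2 * (hd w div 3) + 1"
  by (cases w) (auto simp: psiW_def)
lemma psiW_le: "psiW w \<le> 2 * (hd w div 3) + 4"
  by (cases w) (auto simp: psiW_def)
lemma psiW_len2: "2 \<le> length w \<Longrightarrow> psiW w = 2 * (hd w div 3) + 4"
  by (cases w) (auto simp: psiW_def)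

lemma div3[simp]: "Suc (3*m) div 3 = m" "Suc (Suc (3*m)) div 3 = m" "(3*m+1) div 3 = m" "(3*m+2) div 3 = m"
  by presburger+

lemma in_M_I_distinct:
  assumes "1 \<le> length (attrs T)" "set (attrs T) \<subseteq> F" "distinct (attrs T)"
    "\<forall>r\<in>rows T. length r = length (attrs T) \<and> (\<forall>v\<in>set r. v < k)"
    "\<forall>r\<in>rows T. dec T r \<noteq> {} \<and> finite (dec T r)" "\<forall>r. r \<notin> rows T \<longrightarrow> dec T r = {}"
  shows "in_M k F T"
  using assms nth_eq_iff_index_eq[OF assms(3)] unfolding in_M_def by metis

lemma Gt_in: "m \<in> S \<Longrightarrow> Gt m \<in> CS S"
  unfolding CS_def
proof (intro CollectI conjI)
  assume m: "m \<in> S"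
  show "in_M 2 (FS S) (Gt m)"
    by (rule in_M_I_distinct) (use m in \<open>auto simp: Gt_def FS_def\<close>)
  show "\<forall>f\<in>set (attrs (Gt m)). \<forall>g\<in>set (attrs (Gt m)). f div 3 = g div 3"
    by (simp add: Gt_def)
qed
lemma Ht_in: "m \<in> S \<Longrightarrow> Ht m \<in> CS S"
  unfolding CS_def
proof (intro CollectI conjI)
  assume m: "m \<in> S"
  show "in_M 2 (FS S) (Ht m)"
    by (rule in_M_I_distinct) (use m in \<open>auto simp: Ht_def FS_def\<close>)
  show "\<forall>f\<in>set (attrs (Ht m)). \<forall>g\<in>set (attrs (Ht m)). f div 3 = g div 3"
    by (simp add: Ht_def)
qed
lemma Ot_in: "m \<in> S \<Longrightarrow> Ot m \<in> CS S"
  unfolding CS_def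
proof (intro CollectI conjI)
  assume m: "m \<in> S"
  show "in_M 2 (FS S) (Ot m)"
    by (rule in_M_I_distinct) (use m in \<open>auto simp: Ot_def FS_def\<close>)
  show "\<forall>f\<in>set (attrs (Ot m)). \<forall>g\<in>set (attrs (Ot m)). f div 3 = g div 3"
    by (simp add: Ot_def)
qed



lemma CS_step: "T \<in> CS S \<Longrightarrow> table_op T T' \<Longrightarrow> T' \<in> CS S"
proof -
  assume T: "T \<in> CS S" and op: "table_op T T'"
  have M: "in_M 2 (FS S) T" and D: "\<forall>f\<in>set (attrs T). \<forall>g\<in>set (attrs T). f div 3 = g div 3"
    using T unfolding CS_def by blast+
  have "in_M 2 (FS S) T'" "set (attrs T') \<subseteq> set (attrs T)" using op_in_M[OF op M] by blast+
  then show ?thesis using D unfolding CS_def by blast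
qed

lemma closed_CS: "closed_class 2 (FS S) (CS S)"
  unfolding closed_class_def
proof (intro conjI ballI allI impI)
  show "CS S \<subseteq> {T. in_M 2 (FS S) T}" unfolding CS_def by blast
  fix T T' assume T: "T \<in> CS S" and st: "table_op\<^sup>*\<^sup>* T T'"
  from st T show "T' \<in> CS S"
    by (induction rule: rtranclp_induct) (auto intro: CS_step)
qed

lemma tpair_tp: "S \<noteq> {} \<Longrightarrow> is_tpair (tp S)"
proof -
  assume "S \<noteq> {}"
  then obtain m where "m \<in> S" by blast
  then have "3 * m \<in> FS S" unfolding FS_def by simp
  then show ?thesis unfolding is_tpair_def tp_def using closed_CS by auto
qed

definition mT :: "nat dtable \<Rightarrow> nat" where "mT T = hd (attrs T) div 3"

lemma CS_props:
  assumes "T \<in> CS S"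
  shows "in_M 2 (FS S) T" "attrs T \<noteq> []" "\<And>f. f \<in> set (attrs T) \<Longrightarrow> f div 3 = mT T" "mT T \<in> S"
proof -
  show M: "in_M 2 (FS S) T" using assms unfolding CS_def by blast
  show ne: "attrs T \<noteq> []" using M unfolding in_M_def by auto
  have D: "\<forall>f\<in>set (attrs T). \<forall>g\<in>set (attrs T). f div 3 = g div 3" using assms unfolding CS_def by blast
  have h: "hd (attrs T) \<in> set (attrs T)" using ne by simp
  show "\<And>f. f \<in> set (attrs T) \<Longrightarrow> f div 3 = mT T" using D h unfolding mT_def by blast
  have "set (attrs T) \<subseteq> FS S" using M unfolding in_M_def by blast
  then show "mT T \<in> S" using h unfolding mT_def FS_def by blast
qed

lemma psi_i_bounds:
  assumes "T \<in> CS S"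
  shows "2 * mT T + 1 \<le> psi_i psiW T" "psi_i psiW T \<le> 2 * mT T + 4"
  using psiW_ge[OF CS_props(2)[OF assms]] psiW_le[of "attrs T"] unfolding psi_i_def mT_def by auto

lemma cost_zero_common:
  assumes T: "T \<in> CS S" and nd: "ndt_for 2 T \<Gamma>" and z: "tree_cost psiW \<Gamma> = 0"
  shows "\<exists>c. \<forall>r\<in>rows T. c \<in> dec T r"
proof -
  have wf: "wf_tree 2 \<Gamma>" using nd unfolding ndt_for_def by blast
  obtain \<xi> where xi: "\<xi> \<in> set (tree_paths \<Gamma>)" using tree_paths_nonempty[OF wf] by (meson ex_in_conv)
  have "psiW (map fst (fst \<xi>)) \<le> 0" using cost_path_le[OF xi, of psiW] z by simp
  then have "map fst (fst \<xi>) = []" using psiW_ge[of "map fst (fst \<xi>)"] by (cases "map fst (fst \<xi>) = []") auto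
  then have e: "fst \<xi> = []" by simp
  have "snd \<xi> \<in> dec T r" if r: "r \<in> rows T" for r
  proof -
    have "r \<in> sub_rows T (fst \<xi>)" using e by (auto intro: sub_rows_I[OF r])
    then show ?thesis using nd xi unfolding ndt_for_def by blast
  qed
  then show ?thesis by blast
qed

lemma cost_pos:
  assumes T: "T \<in> CS S" and nd: "ndt_for 2 T \<Gamma>" and z: "tree_cost psiW \<Gamma> \<noteq> 0"
  shows "2 * mT T + 1 \<le> tree_cost psiW \<Gamma>"
proof -
  have wf: "wf_tree 2 \<Gamma>" using nd unfolding ndt_for_def by blast
  obtain \<xi> where xi: "\<xi> \<in> set (tree_paths \<Gamma>)" and c: "tree_cost psiW \<Gamma> = psiW (map fst (fst \<xi>))"
    using cost_path[OF wf] by blast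
  let ?w = "map fst (fst \<xi>)"
  have ne: "?w \<noteq> []" using z c by (auto simp: psiW_simps)
  have "set ?w \<subseteq> tree_attrs \<Gamma>" using tree_paths_attrs[OF xi] .
  also have "\<dots> \<subseteq> set (attrs T)" using nd unfolding ndt_for_def by blast
  finally have "hd ?w \<in> set (attrs T)" using ne hd_in_set by blast
  then have "hd ?w div 3 = mT T" using CS_props(3)[OF T] by blast
  then show ?thesis using psiW_ge[OF ne] c by simp
qed

lemma common_d0:
  assumes M: "in_M 2 F T" and c: "\<forall>r\<in>rows T. c \<in> dec T r"
  shows "psi_d 2 psiW T = 0"
proof -
  have tp: "tree_paths [Term c] = [([], c)]" by (simp add: tree_paths_def)
  have "dt_for 2 T [Term c]"
    unfolding dt_for_def ndt_for_def is_det_tree_def wf_tree_def tree_attrs_def tp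
    using c by (auto intro: sub_rows_I dest: sub_rows_rows)
  moreover have "tree_cost psiW [Term c] = 0" unfolding tree_cost_def tp by (simp add: psiW_simps)
  ultimately have "psi_d 2 psiW T \<le> 0" unfolding psi_d_def by (intro Least_le) blast
  then show ?thesis by simp
qed

lemma psi_a_zero:
  assumes T: "T \<in> CS S" and z: "psi_a 2 psiW T = 0"
  shows "psi_d 2 psiW T = 0" "\<exists>c. \<forall>r\<in>rows T. c \<in> dec T r"
proof -
  have M: "in_M 2 (FS S) T" using CS_props(1)[OF T] .
  obtain \<Gamma> where "ndt_for 2 T \<Gamma>" "tree_cost psiW \<Gamma> = psi_a 2 psiW T" using psi_a_ex[OF M] by auto
  then show c: "\<exists>c. \<forall>r\<in>rows T. c \<in> dec T r" using cost_zero_common[OF T] z by simp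
  then show "psi_d 2 psiW T = 0" using common_d0[OF M] by blast
qed

lemma psi_a_pos:
  assumes T: "T \<in> CS S" and z: "psi_a 2 psiW T \<noteq> 0"
  shows "2 * mT T + 1 \<le> psi_a 2 psiW T"
proof -
  have M: "in_M 2 (FS S) T" using CS_props(1)[OF T] .
  obtain \<Gamma> where "ndt_for 2 T \<Gamma>" "tree_cost psiW \<Gamma> = psi_a 2 psiW T" using psi_a_ex[OF M] by auto
  then show ?thesis using cost_pos[OF T] z by metis
qed

lemma psi_chain:
  assumes T: "T \<in> CS S"
  shows "psi_a 2 psiW T \<le> psi_d 2 psiW T" "psi_d 2 psiW T \<le> psi_i psiW T"
  using psi_a_le_d[OF CS_props(1)[OF T]] psi_d_le_i[OF CS_props(1)[OF T]] by auto



lemma less3: "(i::nat) < 3 \<longleftrightarrow> i = 0 \<or> i = 1 \<or> i = 2" by auto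

lemma det_long_path:
  assumes dt: "dt_for k T \<Gamma>" and nc: "\<not>(\<exists>c. \<forall>r\<in>rows T. c \<in> dec T r)"
   and pairs: "\<And>x. x \<in> set (attrs T) \<Longrightarrow> \<exists>r1\<in>rows T. \<exists>r2\<in>rows T. dec T r1 \<inter> dec T r2 = {} \<and>
        (\<forall>i<length (attrs T). attrs T ! i = x \<longrightarrow> r1 ! i = r2 ! i)"
  shows "\<exists>\<xi>\<in>set (tree_paths \<Gamma>). 2 \<le> length (fst \<xi>)"
proof (rule ccontr)
  assume short: "\<not> ?thesis"
  have nd: "ndt_for k T \<Gamma>" and dd: "is_det_tree \<Gamma>" using dt unfolding dt_for_def by blast+
  obtain t where G: "\<Gamma> = [t]" using dd unfolding is_det_tree_def by (cases \<Gamma>) auto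
  have cov: "(\<Union>\<xi>\<in>set (tree_paths \<Gamma>). sub_rows T (fst \<xi>)) = rows T"
    and decs: "\<forall>\<xi>\<in>set (tree_paths \<Gamma>). \<forall>r\<in>sub_rows T (fst \<xi>). snd \<xi> \<in> dec T r"
    and ats: "tree_attrs \<Gamma> \<subseteq> set (attrs T)" using nd unfolding ndt_for_def by blast+
  have tpG: "set (tree_paths \<Gamma>) = set (node_paths t)" unfolding G tree_paths_def by simp
  show False
  proof (cases t)
    case (Term c)
    have xi: "([], c) \<in> set (tree_paths \<Gamma>)" unfolding tpG Term by simp
    have "c \<in> dec T r" if r: "r \<in> rows T" for r
    proof -
      have "r \<in> sub_rows T []" by (rule sub_rows_I[OF r]) simp
      then show ?thesis using decs xi by fastforce
    qed
    then show False using nc by blast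
  next
    case (Work x es)
    have "x \<in> tree_attrs \<Gamma>" unfolding G tree_attrs_def Work by simp
    then have "x \<in> set (attrs T)" using ats by blast
    then obtain r1 r2 where r1: "r1 \<in> rows T" and r2: "r2 \<in> rows T" and dj: "dec T r1 \<inter> dec T r2 = {}"
      and eq: "\<forall>i<length (attrs T). attrs T ! i = x \<longrightarrow> r1 ! i = r2 ! i" using pairs by blast
    obtain \<xi> where xi: "\<xi> \<in> set (tree_paths \<Gamma>)" and r1s: "r1 \<in> sub_rows T (fst \<xi>)" using cov r1 by blast
    obtain e p where e: "e \<in> set es" and p: "p \<in> set (node_paths (snd e))"
      and xe: "\<xi> = ((x, fst e) # fst p, snd p)" using xi unfolding tpG Work node_paths_Work_set by blast
    have "length (fst \<xi>) < 2" using short xi by auto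
    then have fp: "fst p = []" using xe by simp
    have r2s: "r2 \<in> sub_rows T (fst \<xi>)"
    proof (rule sub_rows_I[OF r2])
      fix q i assume q: "q \<in> set (fst \<xi>)" and i: "i < length (attrs T)" and a: "attrs T ! i = fst q"
      have qq: "q = (x, fst e)" using q xe fp by simp
      have "r1 ! i = snd q" using sub_rows_D[OF r1s q i a] .
      moreover have "r1 ! i = r2 ! i" using eq i a qq by simp
      ultimately show "r2 ! i = snd q" by simp
    qed
    have "snd \<xi> \<in> dec T r1" "snd \<xi> \<in> dec T r2" using decs xi r1s r2s by blast+
    then show False using dj by blast
  qed
qed

lemma Gt_d: "2 * m + 4 \<le> psi_d 2 psiW (Gt m)"
proof -
  have T: "Gt m \<in> CS {m}" using Gt_in by blast
  have M: "in_M 2 (FS {m}) (Gt m)" using CS_props(1)[OF T] .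
  obtain \<Gamma> where dt: "dt_for 2 (Gt m) \<Gamma>" and c: "tree_cost psiW \<Gamma> = psi_d 2 psiW (Gt m)"
    using psi_d_ex[OF M] by auto
  have nc: "\<not>(\<exists>c. \<forall>r\<in>rows (Gt m). c \<in> dec (Gt m) r)" by (auto simp: Gt_def)
  have pairs: "\<exists>r1\<in>rows (Gt m). \<exists>r2\<in>rows (Gt m). dec (Gt m) r1 \<inter> dec (Gt m) r2 = {} \<and>
        (\<forall>i<length (attrs (Gt m)). attrs (Gt m) ! i = x \<longrightarrow> r1 ! i = r2 ! i)" if x: "x \<in> set (attrs (Gt m))" for x
  proof -
    have "x = 3*m \<or> x = 3*m+1 \<or> x = 3*m+2" using x by (auto simp: Gt_def)
    then show ?thesis
    proof (elim disjE)
      assume x: "x = 3*m"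
      show ?thesis
        by (rule bexI[of _ "[0,1,0]"], rule bexI[of _ "[0,0,1]"]) (auto simp: Gt_def x less3 less_Suc_eq)
    next
      assume x: "x = 3*m+1"
      show ?thesis
        by (rule bexI[of _ "[1,0,0]"], rule bexI[of _ "[0,0,1]"]) (auto simp: Gt_def x less3 less_Suc_eq)
    next
      assume x: "x = 3*m+2"
      show ?thesis
        by (rule bexI[of _ "[1,0,0]"], rule bexI[of _ "[0,1,0]"]) (auto simp: Gt_def x less3 less_Suc_eq)
    qed
  qed
  obtain \<xi> where xi: "\<xi> \<in> set (tree_paths \<Gamma>)" and l: "2 \<le> length (fst \<xi>)"
    using det_long_path[OF dt nc pairs] by blast
  let ?w = "map fst (fst \<xi>)"
  have l2: "2 \<le> length ?w" using l by simp
  then have ne: "?w \<noteq> []" by auto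
  have "set ?w \<subseteq> tree_attrs \<Gamma>" using tree_paths_attrs[OF xi] .
  also have "\<dots> \<subseteq> set (attrs (Gt m))" using dt unfolding dt_for_def ndt_for_def by blast
  finally have "hd ?w \<in> set (attrs (Gt m))" using ne hd_in_set by blast
  then have "hd ?w div 3 = m" by (auto simp: Gt_def)
  then have "psiW ?w = 2 * m + 4" using psiW_len2[OF l2] by simp
  then show ?thesis using cost_path_le[OF xi, of psiW] c by simp
qed



lemma Gt_a: "psi_a 2 psiW (Gt m) \<le> 2 * m + 1"
proof -
  let ?G = "[Work (3*m) [(1, Term 0)], Work (3*m+1) [(1, Term 1)], Work (3*m+2) [(1, Term 2)]] :: nat dtree"
  have tp: "set (tree_paths ?G) = {([(3*m,1)],0), ([(3*m+1,1)],1), ([(3*m+2,1)],2)}"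
    by (simp add: tree_paths_def)
  have s0: "sub_rows (Gt m) [(3*m,1)] = {[1,0,0]}"
    by (auto simp: sub_rows_def Gt_def less3 less_Suc_eq)
  have s1: "sub_rows (Gt m) [(3*m+1,1)] = {[0,1,0]}"
    by (auto simp: sub_rows_def Gt_def less3 less_Suc_eq)
  have s2: "sub_rows (Gt m) [(3*m+2,1)] = {[0,0,1]}"
    by (auto simp: sub_rows_def Gt_def less3 less_Suc_eq)
  have nd: "ndt_for 2 (Gt m) ?G"
    unfolding ndt_for_def
  proof (intro conjI)
    show "wf_tree 2 ?G" by (simp add: wf_tree_def)
    show "tree_attrs ?G \<subseteq> set (attrs (Gt m))" by (simp add: tree_attrs_def Gt_def)
    show "(\<Union>\<xi>\<in>set (tree_paths ?G). sub_rows (Gt m) (fst \<xi>)) = rows (Gt m)"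
      unfolding tp using s0 s1 s2 by (simp add: Gt_def insert_commute)
    show "\<forall>\<xi>\<in>set (tree_paths ?G). \<forall>r\<in>sub_rows (Gt m) (fst \<xi>). snd \<xi> \<in> dec (Gt m) r"
      unfolding tp using s0 s1 s2 by (simp add: Gt_def)
  qed
  have "tree_cost psiW ?G = 2 * m + 1"
    unfolding tree_cost_def tp by (simp add: psiW_simps)
  then show ?thesis using nd unfolding psi_a_def by (metis (mono_tags, lifting) Least_le)
qed

lemma Ht_vals: "psi_i psiW (Ht m) = 2 * m + 1" "psi_d 2 psiW (Ht m) = 2 * m + 1" "psi_a 2 psiW (Ht m) = 2 * m + 1"
proof -
  have T: "Ht m \<in> CS {m}" using Ht_in by blast
  show i: "psi_i psiW (Ht m) = 2 * m + 1" by (simp add: psi_i_def Ht_def psiW_simps)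
  have nc: "\<not>(\<exists>c. \<forall>r\<in>rows (Ht m). c \<in> dec (Ht m) r)" by (auto simp: Ht_def)
  have "psi_a 2 psiW (Ht m) \<noteq> 0" using psi_a_zero(2)[OF T] nc by blast
  then have "2 * mT (Ht m) + 1 \<le> psi_a 2 psiW (Ht m)" using psi_a_pos[OF T] by blast
  moreover have "mT (Ht m) = m" by (simp add: mT_def Ht_def)
  ultimately have lo: "2 * m + 1 \<le> psi_a 2 psiW (Ht m)" by simp
  show "psi_d 2 psiW (Ht m) = 2 * m + 1" using psi_chain[OF T] i lo by linarith
  show "psi_a 2 psiW (Ht m) = 2 * m + 1" using psi_chain[OF T] i lo by linarith
qed

lemma Ot_vals: "psi_i psiW (Ot m) = 2 * m + 1" "psi_d 2 psiW (Ot m) = 0" "psi_a 2 psiW (Ot m) = 0"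
proof -
  have T: "Ot m \<in> CS {m}" using Ot_in by blast
  show "psi_i psiW (Ot m) = 2 * m + 1" by (simp add: psi_i_def Ot_def psiW_simps)
  have "\<forall>r\<in>rows (Ot m). 0 \<in> dec (Ot m) r" by (simp add: Ot_def)
  then show d: "psi_d 2 psiW (Ot m) = 0" using common_d0[OF CS_props(1)[OF T]] by blast
  show "psi_a 2 psiW (Ot m) = 0" using psi_chain(1)[OF T] d by simp
qed



abbreviation UU :: "('a \<Rightarrow> nat) \<Rightarrow> ('a \<Rightarrow> nat) \<Rightarrow> 'a set \<Rightarrow> nat \<Rightarrow> nat option" where "UU g h C n \<equiv> (let X = {g T | T. T \<in> C \<and> h T \<le> n} in if X \<noteq> {} \<and> finite X then Some (Max X) else None)"

lemma U_tp: "U_fun (tp S) b c n = UU (psi_m b 2 psiW) (psi_m c 2 psiW) (CS S) n"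
  by (simp add: U_fun_def tp_def)

lemma U_some:
  assumes "T0 \<in> C" "g T0 = (n::nat)" "h T0 \<le> (n::nat)" "\<And>T. T \<in> C \<Longrightarrow> h T \<le> n \<Longrightarrow> g T \<le> n"
  shows "UU g h C n = Some n"
proof -
  let ?X = "{g T | T. T \<in> C \<and> h T \<le> n}"
  have sub: "?X \<subseteq> {..n}" using assms(4) by auto
  then have fin: "finite ?X" using finite_subset by blast
  have "g T0 \<in> ?X" using assms(1,3) by blast
  then have mem: "n \<in> ?X" using assms(2) by simp
  have ne: "?X \<noteq> {}" using mem by blast
  have mx: "Max ?X = n" using Max_eqI[OF fin _ mem] sub by (meson atMost_iff subsetD)
  show ?thesis using fin ne mx by (simp only: Let_def if_True simp_thms)
qed

lemma U_none:
  assumes "infinite {g T | T. T \<in> C \<and> h T \<le> n}"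
  shows "UU g h C n = None"
  using assms by (simp add: Let_def)

lemma gamma_I:
  assumes "infinite AA" "infinite BB" "\<And>n. n \<in> AA \<Longrightarrow> \<exists>v. g n = Some v \<and> n \<le> v"
    "\<And>n. n \<in> BB \<Longrightarrow> \<exists>v. g n = Some v \<and> v \<le> n"
  shows "has_typ g Gamma"
proof -
  have "AA \<subseteq> pdom_plus g" using assms(3) unfolding pdom_plus_def pdom_def by force
  moreover have "BB \<subseteq> pdom_minus g" using assms(4) unfolding pdom_minus_def pdom_def by force
  ultimately show ?thesis using assms(1,2) infinite_super by auto
qed

lemma inf_img: "infinite (S::nat set) \<Longrightarrow> infinite ((\<lambda>m. 2 * m + c) ` S)"
proof
  assume "infinite S" "finite ((\<lambda>m. 2 * m + c) ` S)"
  moreover have "inj_on (\<lambda>m::nat. 2 * m + c) S" by (auto simp: inj_on_def)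
  ultimately show False using finite_imageD by blast
qed

lemma gammaHt:
  assumes S: "infinite S" and le: "\<And>T. T \<in> CS S \<Longrightarrow> psi_m b 2 psiW T \<le> psi_m c 2 psiW T"
    and hb: "\<And>m. psi_m b 2 psiW (Ht m) = 2*m+1" and hc: "\<And>m. psi_m c 2 psiW (Ht m) = 2*m+1"
  shows "has_typ (U_fun (tp S) b c) Gamma"
proof -
  have *: "U_fun (tp S) b c n = Some n" if n: "n \<in> (\<lambda>m. 2 * m + 1) ` S" for n
  proof -
    obtain m where m: "m \<in> S" "n = 2 * m + 1" using n by blast
    show ?thesis unfolding U_tp
      by (rule U_some[OF Ht_in[OF m(1)]]) (use m hb hc le in \<open>auto intro: order_trans\<close>)
  qed
  show ?thesis by (rule gamma_I[OF inf_img[OF S, of 1] inf_img[OF S, of 1]]) (use * in blast)+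
qed

lemma epsOt:
  assumes S: "infinite S" and hc: "\<And>m. psi_m c 2 psiW (Ot m) = 0"
  shows "has_typ (U_fun (tp S) I c) Epsilon"
proof -
  have "U_fun (tp S) I c n = None" for n
  proof -
    have "(\<lambda>m. 2 * m + 1) ` S \<subseteq> {psi_m I 2 psiW T | T. T \<in> CS S \<and> psi_m c 2 psiW T \<le> n}"
    proof
      fix x assume "x \<in> (\<lambda>m. 2 * m + 1) ` S"
      then obtain m where m: "m \<in> S" "x = 2 * m + 1" by blast
      then show "x \<in> {psi_m I 2 psiW T | T. T \<in> CS S \<and> psi_m c 2 psiW T \<le> n}"
        using Ot_in[OF m(1)] hc[of m] Ot_vals(1)[of m] by force
    qed
    then have "infinite {psi_m I 2 psiW T | T. T \<in> CS S \<and> psi_m c 2 psiW T \<le> n}"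
      using inf_img[OF S] infinite_super by blast
    then show ?thesis unfolding U_tp by (rule U_none)
  qed
  then have "pdom (U_fun (tp S) I c) = {}" unfolding pdom_def by simp
  then show ?thesis by simp
qed

lemma DA_basic:
  assumes Sne: "S \<noteq> {}"
  shows "\<exists>v. U_fun (tp S) D A n = Some v \<and> (\<forall>T. T \<in> CS S \<longrightarrow> psi_a 2 psiW T \<le> n \<longrightarrow> psi_d 2 psiW T \<le> v)
     \<and> v \<in> {psi_d 2 psiW T | T. T \<in> CS S \<and> psi_a 2 psiW T \<le> n}"
proof -
  obtain m0 where m0: "m0 \<in> S" using Sne by blast
  have bnd: "psi_d 2 psiW T \<le> n + 3" if T: "T \<in> CS S" and a: "psi_a 2 psiW T \<le> n" for T
  proof (cases "psi_a 2 psiW T = 0")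
    case True then show ?thesis using psi_a_zero(1)[OF T] by simp
  next
    case False
    then have "2 * mT T + 1 \<le> n" using psi_a_pos[OF T] a by linarith
    moreover have "psi_d 2 psiW T \<le> 2 * mT T + 4" using psi_chain[OF T] psi_i_bounds(2)[OF T] by linarith
    ultimately show ?thesis by linarith
  qed
  let ?X = "{psi_d 2 psiW T | T. T \<in> CS S \<and> psi_a 2 psiW T \<le> n}"
  have sub: "?X \<subseteq> {..n+3}" using bnd by auto
  then have fin: "finite ?X" using finite_subset by blast
  have ne: "?X \<noteq> {}" using Ot_in[OF m0] Ot_vals(3)[of m0] by force
  have "\<forall>T. T \<in> CS S \<longrightarrow> psi_a 2 psiW T \<le> n \<longrightarrow> psi_d 2 psiW T \<le> Max ?X" using fin by (auto intro: Max_ge)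
  moreover have "U_fun (tp S) D A n = Some (Max ?X)" unfolding U_tp using fin ne by (simp add: Let_def)
  moreover have "Max ?X \<in> ?X" using Max_in[OF fin ne] .
  ultimately show ?thesis by blast
qed

lemma DA_gt:
  assumes m: "m \<in> S" and n: "2 * m + 1 \<le> n" "n \<le> 2 * m + 3"
  shows "\<exists>v. U_fun (tp S) D A n = Some v \<and> n < v"
proof -
  obtain v where v: "U_fun (tp S) D A n = Some v" "\<forall>T. T \<in> CS S \<longrightarrow> psi_a 2 psiW T \<le> n \<longrightarrow> psi_d 2 psiW T \<le> v"
    using DA_basic[of S n] m by blast
  have "psi_d 2 psiW (Gt m) \<le> v" using v(2) Gt_in[OF m] Gt_a[of m] n by simp
  then show ?thesis using Gt_d[of m] n v(1) by auto
qed

lemma DA_le: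
  assumes Sne: "S \<noteq> {}" and n: "\<forall>m\<in>S. \<not> (2 * m + 1 \<le> n \<and> n \<le> 2 * m + 3)"
  shows "\<exists>v. U_fun (tp S) D A n = Some v \<and> v \<le> n"
proof -
  obtain v where v: "U_fun (tp S) D A n = Some v" "v \<in> {psi_d 2 psiW T | T. T \<in> CS S \<and> psi_a 2 psiW T \<le> n}"
    using DA_basic[OF Sne, of n] by blast
  then obtain T where T: "T \<in> CS S" "psi_a 2 psiW T \<le> n" "v = psi_d 2 psiW T" by blast
  have "psi_d 2 psiW T \<le> n"
  proof (cases "psi_a 2 psiW T = 0")
    case True then show ?thesis using psi_a_zero(1)[OF T(1)] by simp
  next
    case False
    then have a: "2 * mT T + 1 \<le> n" using psi_a_pos[OF T(1)] T(2) by linarith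
    have "mT T \<in> S" using CS_props(4)[OF T(1)] .
    then have "2 * mT T + 4 \<le> n" using n a by force
    moreover have "psi_d 2 psiW T \<le> 2 * mT T + 4" using psi_chain[OF T(1)] psi_i_bounds(2)[OF T(1)] by linarith
    ultimately show ?thesis by linarith
  qed
  then show ?thesis using v(1) T(3) by blast
qed

lemma DA_gamma:
  assumes S: "infinite S" and S': "infinite (- S)"
  shows "has_typ (U_fun (tp S) D A) Gamma"
proof (rule gamma_I[OF inf_img[OF S, of 1] inf_img[OF S', of 2]])
  fix n assume "n \<in> (\<lambda>m. 2 * m + 1) ` S"
  then obtain m where m: "m \<in> S" "n = 2 * m + 1" by blast
  then show "\<exists>v. U_fun (tp S) D A n = Some v \<and> n \<le> v" using DA_gt[OF m(1)] by fastforce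
next
  fix n assume "n \<in> (\<lambda>m. 2 * m + 2) ` (- S)"
  then obtain m0 where m0: "m0 \<notin> S" "n = 2 * m0 + 2" by blast
  have Sne: "S \<noteq> {}" using S by auto
  have "\<forall>m\<in>S. \<not> (2 * m + 1 \<le> n \<and> n \<le> 2 * m + 3)"
  proof (intro ballI notI)
    fix m assume "m \<in> S" "2 * m + 1 \<le> n \<and> n \<le> 2 * m + 3"
    then have "m = m0" using m0 by arith
    then show False using m0 \<open>m \<in> S\<close> by simp
  qed
  then show "\<exists>v. U_fun (tp S) D A n = Some v \<and> v \<le> n" using DA_le[OF Sne] by blast
qed

lemma DA_delta: "has_typ (U_fun (tp UNIV) D A) Delta"
proof -
  have ex: "\<exists>v. U_fun (tp UNIV) D A n = Some v" for n using DA_basic[of UNIV n] by blast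
  have "pdom (U_fun (tp UNIV) D A) = UNIV" unfolding pdom_def using ex by auto
  moreover have "pdom_minus (U_fun (tp UNIV) D A) \<subseteq> {0}"
  proof
    fix n assume n: "n \<in> pdom_minus (U_fun (tp UNIV) D A)"
    show "n \<in> {0}"
    proof (rule ccontr)
      assume "n \<notin> {0}"
      then have "2 * ((n - 1) div 2) + 1 \<le> n" "n \<le> 2 * ((n - 1) div 2) + 3" by auto
      then obtain v where "U_fun (tp UNIV) D A n = Some v" "n < v" using DA_gt[of "(n - 1) div 2" UNIV n] by blast
      then show False using n unfolding pdom_minus_def by auto
    qed
  qed
  ultimately show ?thesis using finite_subset by auto
qed

lemma types_common:
  assumes S: "infinite S" and b: "b \<noteq> I \<or> c = I" and nda: "\<not> (b = D \<and> c = A)"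
  shows "has_typ (U_fun (tp S) b c) (t5 b c)"
proof -
  have le: "psi_m b 2 psiW T \<le> psi_m c 2 psiW T" if T: "T \<in> CS S" for T
    using psi_chain[OF T] b nda by (cases b; cases c) auto
  have h: "psi_m x 2 psiW (Ht m) = 2 * m + 1" for x m using Ht_vals by (cases x) auto
  have g: "has_typ (U_fun (tp S) b c) Gamma" by (rule gammaHt[OF S le h h])
  show ?thesis using g b nda by (cases b; cases c) auto
qed

lemma types_t5:
  assumes S: "infinite S" and S': "infinite (- S)"
  shows "upper_type_is (tp S) t5"
  unfolding upper_type_is_def
proof (intro allI)
  fix b c
  show "has_typ (U_fun (tp S) b c) (t5 b c)"
  proof (cases "b = I \<and> c \<noteq> I")
    case True
    have "psi_m c 2 psiW (Ot m) = 0" for m using True Ot_vals by (cases c) auto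
    then show ?thesis using epsOt[OF S] True by (cases c) auto
  next
    case False
    show ?thesis
    proof (cases "b = D \<and> c = A")
      case True then show ?thesis using DA_gamma[OF S S'] by simp
    next
      case F2: False
      show ?thesis by (rule types_common[OF S _ F2]) (use False in auto)
    qed
  qed
qed

lemma types_t6: "upper_type_is (tp UNIV) t6"
  unfolding upper_type_is_def
proof (intro allI)
  fix b c
  have S: "infinite (UNIV :: nat set)" by simp
  show "has_typ (U_fun (tp UNIV) b c) (t6 b c)"
  proof (cases "b = I \<and> c \<noteq> I")
    case True
    have "psi_m c 2 psiW (Ot m) = 0" for m using True Ot_vals by (cases c) auto
    then show ?thesis using epsOt[OF S] True by (cases c) auto
  next
    case False
    show ?thesis
    proof (cases "b = D \<and> c = A")
      case True then show ?thesis using DA_delta by simp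
    next
      case F2: False
      have "has_typ (U_fun (tp UNIV) b c) (t5 b c)" by (rule types_common[OF S _ F2]) (use False in auto)
      then show ?thesis using False F2 by (cases b; cases c) auto
    qed
  qed
qed



lemma in_M_F: "in_M k F T \<longleftrightarrow> in_M k UNIV T \<and> set (attrs T) \<subseteq> F"
  unfolding in_M_def by blast

lemma FS_Un: "FS (S1 \<union> S2) = FS S1 \<union> FS S2" unfolding FS_def by auto

lemma CS_Un: "CS (S1 \<union> S2) = CS S1 \<union> CS S2"
proof
  show "CS S1 \<union> CS S2 \<subseteq> CS (S1 \<union> S2)"
    unfolding CS_def FS_Un using in_M_F by blast
next
  show "CS (S1 \<union> S2) \<subseteq> CS S1 \<union> CS S2"
  proof
    fix T assume T: "T \<in> CS (S1 \<union> S2)"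
    have M: "in_M 2 UNIV T" using CS_props(1)[OF T] in_M_F by blast
    have D: "\<forall>f\<in>set (attrs T). \<forall>g\<in>set (attrs T). f div 3 = g div 3" using T unfolding CS_def by blast
    have m: "mT T \<in> S1 \<union> S2" using CS_props(4)[OF T] .
    have fa: "\<And>f. f \<in> set (attrs T) \<Longrightarrow> f div 3 = mT T" using CS_props(3)[OF T] .
    show "T \<in> CS S1 \<union> CS S2"
    proof (cases "mT T \<in> S1")
      case True
      then have "set (attrs T) \<subseteq> FS S1" using fa unfolding FS_def by auto
      then show ?thesis using M D in_M_F unfolding CS_def by blast
    next
      case False
      then have "mT T \<in> S2" using m by blast
      then have "set (attrs T) \<subseteq> FS S2" using fa unfolding FS_def by auto
      then show ?thesis using M D in_M_F unfolding CS_def by blast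
    qed
  qed
qed

lemma union_ok:
  assumes "S1 \<inter> S2 = {}" "S1 \<noteq> {}" "S2 \<noteq> {}"
  shows "is_tpair (tp S1) \<and> is_tpair (tp S2) \<and> compatible (tp S1) (tp S2) \<and> is_union (tp S1) (tp S2) (tp (S1 \<union> S2))"
proof -
  have c: "compatible (tp S1) (tp S2)" unfolding compatible_def tp_def FS_def using assms(1) by auto
  have u: "is_union (tp S1) (tp S2) (tp (S1 \<union> S2))"
    unfolding is_union_def using tpair_tp[of "S1 \<union> S2"] assms(2) by (simp add: tp_def FS_Un CS_Un)
  show ?thesis using c u tpair_tp assms(2,3) by blast
qed

lemma inf_mod: "infinite {m::nat. m mod 4 = r}" if "r < 4" for r
proof
  assume "finite {m::nat. m mod 4 = r}"
  then obtain k where k: "{m::nat. m mod 4 = r} \<subseteq> {..<k}" by (auto simp: finite_nat_set_iff_bounded)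
  have "(4 * k + r) mod 4 = r" using that by simp
  then have "4 * k + r < k" using k by blast
  then show False by simp
qed



theorem proposition6:
  shows "(\<exists>\<tau>1 \<tau>2 \<tau> :: nat tpair.
            is_tpair \<tau>1 \<and> is_tpair \<tau>2 \<and> compatible \<tau>1 \<tau>2 \<and> is_union \<tau>1 \<tau>2 \<tau> \<and>
            upper_type_is \<tau>1 t5 \<and> upper_type_is \<tau>2 t5 \<and> upper_type_is \<tau> t5)
       \<and> (\<exists>\<tau>1 \<tau>2 \<tau> :: nat tpair.
            is_tpair \<tau>1 \<and> is_tpair \<tau>2 \<and> compatible \<tau>1 \<tau>2 \<and> is_union \<tau>1 \<tau>2 \<tau> \<and>
            upper_type_is \<tau>1 t5 \<and> upper_type_is \<tau>2 t5 \<and> upper_type_is \<tau> t6)"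
proof (rule conjI)
  define S1 where "S1 = {m::nat. m mod 4 = 0}"
  define S2 where "S2 = {m::nat. m mod 4 = 1}"
  have i0: "infinite {m::nat. m mod 4 = 0}" "infinite {m::nat. m mod 4 = 1}" "infinite {m::nat. m mod 4 = 2}"
    using inf_mod by auto
  have z: "(0::nat) \<in> S1" "(1::nat) \<in> S2" unfolding S1_def S2_def by auto
  have dj: "S1 \<inter> S2 = {}" unfolding S1_def S2_def by auto
  have d: "S1 \<inter> S2 = {}" "S1 \<noteq> {}" "S2 \<noteq> {}" using z dj by auto
  have c2: "{m::nat. m mod 4 = 2} \<subseteq> - S1" "{m::nat. m mod 4 = 2} \<subseteq> - S2" "{m::nat. m mod 4 = 2} \<subseteq> - (S1 \<union> S2)"
    unfolding S1_def S2_def by auto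
  have t1: "upper_type_is (tp S1) t5"
    by (rule types_t5) (use i0 c2 infinite_super in \<open>auto simp: S1_def\<close>)
  have t2: "upper_type_is (tp S2) t5"
    by (rule types_t5) (use i0 c2 infinite_super in \<open>auto simp: S2_def\<close>)
  have t3: "upper_type_is (tp (S1 \<union> S2)) t5"
  proof (rule types_t5)
    show "infinite (S1 \<union> S2)" using i0(1) unfolding S1_def by auto
    show "infinite (- (S1 \<union> S2))" using i0(3) c2(3) infinite_super by blast
  qed
  show "\<exists>\<tau>1 \<tau>2 \<tau> :: nat tpair.
            is_tpair \<tau>1 \<and> is_tpair \<tau>2 \<and> compatible \<tau>1 \<tau>2 \<and> is_union \<tau>1 \<tau>2 \<tau> \<and>
            upper_type_is \<tau>1 t5 \<and> upper_type_is \<tau>2 t5 \<and> upper_type_is \<tau> t5"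
    using union_ok[OF d] t1 t2 t3 by blast
next
  define S1 where "S1 = {m::nat. even m}"
  define S2 where "S2 = {m::nat. odd m}"
  have i0: "infinite {m::nat. m mod 4 = 0}" "infinite {m::nat. m mod 4 = 1}"
    using inf_mod by auto
  have z: "(0::nat) \<in> S1" "(1::nat) \<in> S2" unfolding S1_def S2_def by auto
  have dj: "S1 \<inter> S2 = {}" unfolding S1_def S2_def by auto
  have d: "S1 \<inter> S2 = {}" "S1 \<noteq> {}" "S2 \<noteq> {}" using z dj by auto
  have e0: "even m" if "m mod 4 = 0" for m :: nat using that by presburger
  have e1: "odd m" if "m mod 4 = 1" for m :: nat using that by presburger
  have s0: "{m::nat. m mod 4 = 0} \<subseteq> S1" "{m::nat. m mod 4 = 0} \<subseteq> - S2"
    unfolding S1_def S2_def using e0 by auto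
  have s1: "{m::nat. m mod 4 = 1} \<subseteq> S2" "{m::nat. m mod 4 = 1} \<subseteq> - S1"
    unfolding S1_def S2_def using e1 by auto
  have t1: "upper_type_is (tp S1) t5"
    by (rule types_t5) (use i0 s0 s1 infinite_super in blast)+
  have t2: "upper_type_is (tp S2) t5"
    by (rule types_t5) (use i0 s0 s1 infinite_super in blast)+
  have U: "S1 \<union> S2 = UNIV" unfolding S1_def S2_def by auto
  have t3: "upper_type_is (tp (S1 \<union> S2)) t6" unfolding U by (rule types_t6)
  show "\<exists>\<tau>1 \<tau>2 \<tau> :: nat tpair.
            is_tpair \<tau>1 \<and> is_tpair \<tau>2 \<and> compatible \<tau>1 \<tau>2 \<and> is_union \<tau>1 \<tau>2 \<tau> \<and>
            upper_type_is \<tau>1 t5 \<and> upper_type_is \<tau>2 t5 \<and> upper_type_is \<tau> t6"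
    using union_ok[OF d] t1 t2 t3 by blast
qed


end
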